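(* In the setting below (the extended process built from a semi-Markov process satisfying conditions (i)–(v)), for each $1\le i\le\overline M$ there is a function $\overline\tau^\varepsilon_i$ such that $\lim_{\varepsilon\to0}\mathbb E\big(\overline T^\varepsilon(\bar x,\overline S_j)\big)/\overline\tau^\varepsilon_i=1$ uniformly in $\bar x\in\overline S_i$ for every $1\le j\le\overline M$ with $\overline P^\varepsilon_{ij}\not\equiv0$. Moreover there are $C,\varepsilon_0>0$ such that $\mathrm{Var}\big(\overline T^\varepsilon(\bar x,\overline S_j)\big)\le C(\overline\tau^\varepsilon_i)^2$ for every $\varepsilon\le\varepsilon_0$ (and $\bar x\in\overline S_i$), provided $\overline P^\varepsilon_{ij}\not\equiv0$.
   Context: $S$ is a metric space partitioned into disjoint Borel sets $S_1,\dots,S_M$; for $\varepsilon>0$, $Q^\varepsilon$ is a Markov kernel from $S$ to $S\times[0,\infty)$, $P^\varepsilon(x,B)=Q^\varepsilon(x,B\times[0,\infty))$, and for $P^\varepsilon(x,B)>0$, $T^\varepsilon(x,B)$ has law $\mathbb P(T^\varepsilon(x,B)\le t)=Q^\varepsilon(x,B\times[0,t])/P^\varepsilon(x,B)$. Assumptions: (i) $P^\varepsilon(x,S_i)=0$ for $x\in S_i$. (ii) For $i\ne j$, either $P^\varepsilon(x,S_j)=0$ for all $x\in S_i,\varepsilon$ (set $P^\varepsilon_{ij}\equiv0$) or it is positive for all $x\in S_i,\varepsilon$ and there are positive $P^\varepsilon_{ij}$ with $P^\varepsilon(x,S_j)/P^\varepsilon_{ij}\to1$ uniformly in $x\in S_i$;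 $\sum_{j\ne i}P^\varepsilon_{ij}=1$. (iii) communication: for $i\ne j$ a chain $i=i_1,\dots,i_k=j$ with $P^\varepsilon_{i_ri_{r+1}}>0$. (iv) For $P^\varepsilon_{ij}\not\equiv0$ there are $\tau^\varepsilon_{ij}$ with $\mathbb ET^\varepsilon(x,S_j)/\tau^\varepsilon_{ij}\to1$ uniformly in $x\in S_i$. (v) There are $C,\varepsilon_0$ with $\mathrm{Var}\,T^\varepsilon(x,S_j)\le C(\tau^\varepsilon_{ij})^2$ for $\varepsilon\le\varepsilon_0$, $x\in S_i$. Extended process: $\overline S=\{(x,j):x\in S_i,\ 1\le i,j\le M,\ P^\varepsilon_{ij}\not\equiv0\}$, with kernel $\overline Q^\varepsilon((x,j),(A\times\{k\})\times I)=\frac{1}{P^\varepsilon(x,S_j)}\int_{A\cap S_j}P^\varepsilon(y,S_k)\,Q^\varepsilon(x,dy\times I)$ for Borel $A\subseteq S$, $I\subseteq[0,\infty)$. $\overline S$ is partitioned into the sets $S_a\times\{b\}$ (with $P^\varepsilon_{ab}\not\equiv0$), re-indexed as $\overline S_1,\dots,\overline S_{\overline M}$. $\overline P^\varepsilon(\bar x,B)=\overline Q^\varepsilon(\bar x,B\times[0,\infty))$ and $\overline T^\varepsilon(\bar x,B)$ has law $\overline Q^\varepsilon(\bar x,B\times\cdot)/\overline P^\varepsilon(\bar x,B)$. If $\overline S_i=S_a\times\{b\}$ and $\overline S_j=S_c\times\{d\}$, set $\overline P^\varepsilon_{ij}=P^\varepsilon_{cd}$ if $b=c$ and $\overline P^\varepsilon_{ij}\equiv0$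 otherwise. *)

theory Defs
  imports "HOL-Probability.Probability"
begin

text \<open>A kernel value K is a measure on (state) x [0,oo) (time).
  Pk K B = P(x,B) = Q(x, B x [0,oo));  Tlaw K B = law of T(x,B);
  ET = its expectation, VarT = its variance (as an extended nonnegative real).\<close>

definition Pk :: "('b \<times> real) measure \<Rightarrow> 'b set \<Rightarrow> real" where
  "Pk K B = measure K (B \<times> {0..})"

definition Tlaw :: "('b \<times> real) measure \<Rightarrow> 'b set \<Rightarrow> real measure" where
  "Tlaw K B = distr (density K (\<lambda>z. indicator (B \<times> {0..}) z / ennreal (Pk K B))) borel snd"

definition ET :: "('b \<times> real) measure \<Rightarrow> 'b set \<Rightarrow> real" where
  "ET K B = (\<integral>t. t \<partial>(Tlaw K B))"

definition VarT :: "('b \<times> real) measure \<Rightarrow> 'b set \<Rightarrow> ennreal" where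
  "VarT K B = (\<integral>\<^sup>+t. ennreal ((t - ET K B)\<^sup>2) \<partial>(Tlaw K B))"

definition not_ident_zero :: "(real \<Rightarrow> real) \<Rightarrow> bool" where
  "not_ident_zero f \<longleftrightarrow> (\<exists>\<epsilon>>0. f \<epsilon> \<noteq> 0)"

text \<open>The extended kernel
  Qbar((x,j), (A x {k}) x I) = 1/P(x,S_j) * integral over A\<inter>S_j of P(y,S_k) Q(x, dy x I).\<close>
definition Qbar :: "(real \<Rightarrow> 'a::topological_space \<Rightarrow> ('a \<times> real) measure) \<Rightarrow> (nat \<Rightarrow> 'a set) \<Rightarrow> nat
    \<Rightarrow> real \<Rightarrow> 'a \<times> nat \<Rightarrow> (('a \<times> nat) \<times> real) measure" where
  "Qbar Q Sp M \<epsilon> xj = measure_of UNIV (sets ((borel \<Otimes>\<^sub>M count_space UNIV) \<Otimes>\<^sub>M borel))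
     (\<lambda>E. (\<integral>\<^sup>+z. indicator (Sp (snd xj) \<times> UNIV) z *
              (\<Sum>k<M. ennreal (Pk (Q \<epsilon> (fst z)) (Sp k)) * indicator E ((fst z, k), snd z))
            \<partial>(Q \<epsilon> (fst xj))) / ennreal (Pk (Q \<epsilon> (fst xj)) (Sp (snd xj))))"

text \<open>Pbar for the extended partition, indexed by pairs (a,b) standing for S_a x {b}.\<close>
definition Pbar :: "(real \<Rightarrow> nat \<Rightarrow> nat \<Rightarrow> real) \<Rightarrow> real \<Rightarrow> nat \<times> nat \<Rightarrow> nat \<times> nat \<Rightarrow> real" where
  "Pbar P \<epsilon> ab cd = (if snd ab = fst cd then P \<epsilon> (fst cd) (snd cd) else 0)"

end

theory Submission
  imports Defs
begin

lemma Tlaw_nn: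
  assumes snd: "snd \<in> K \<rightarrow>\<^sub>M borel" and B: "B \<times> {0..} \<in> sets K"
    and g: "g \<in> borel_measurable borel"
  shows "(\<integral>\<^sup>+t. g t \<partial>Tlaw K B) = (\<integral>\<^sup>+z. g (snd z) * indicator (B \<times> {0..}) z \<partial>K) / ennreal (Pk K B)"
proof -
  have m: "(\<lambda>z. indicator (B \<times> {0..}) z / ennreal (Pk K B)) \<in> borel_measurable K"
    using B by measurable
  have s: "snd \<in> density K (\<lambda>z. indicator (B \<times> {0..}) z / ennreal (Pk K B)) \<rightarrow>\<^sub>M borel"
    using snd by (subst measurable_cong_sets[OF sets_density refl])
  have "(\<integral>\<^sup>+t. g t \<partial>Tlaw K B) = (\<integral>\<^sup>+z. g (snd z) \<partial>density K (\<lambda>z. indicator (B \<times> {0..}) z / ennreal (Pk K B)))"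
    unfolding Tlaw_def by (rule nn_integral_distr[OF s]) (use g in simp)
  also have "\<dots> = (\<integral>\<^sup>+z. (g (snd z) * indicator (B \<times> {0..}) z) / ennreal (Pk K B) \<partial>K)"
    by (subst nn_integral_density[OF m]) (simp_all add: ennreal_times_divide mult.commute measurable_compose[OF snd g])
  also have "\<dots> = (\<integral>\<^sup>+z. g (snd z) * indicator (B \<times> {0..}) z \<partial>K) / ennreal (Pk K B)"
    by (rule nn_integral_divide) (intro borel_measurable_times_ennreal measurable_compose[OF snd g] borel_measurable_indicator B)
  finally show ?thesis .
qed

lemma Tlaw_sets: "sets (Tlaw K B) = sets borel"
  unfolding Tlaw_def by simp

lemma ET_eq:
  assumes snd: "snd \<in> K \<rightarrow>\<^sub>M borel" and B: "B \<times> {0..} \<in> sets K"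
  shows "ET K B = enn2real ((\<integral>\<^sup>+z. ennreal (snd z) * indicator (B \<times> {0..}) z \<partial>K) / ennreal (Pk K B))"
proof -
  have "(\<integral>\<^sup>+t. indicator {..<0} t \<partial>Tlaw K B) = (\<integral>\<^sup>+z. indicator {..<0::real} (snd z) * indicator (B \<times> {0..}) z \<partial>K) / ennreal (Pk K B)"
    by (rule Tlaw_nn[OF snd B]) simp
  also have "\<dots> = 0"
  proof -
    have e: "(\<lambda>z. indicator {..<0::real} (snd z) * indicator (B \<times> {0..}) z) = (\<lambda>z. 0::ennreal)"
      by (auto simp: indicator_def fun_eq_iff)
    show ?thesis unfolding e by simp
  qed
  finally have "emeasure (Tlaw K B) {..<0} = 0"
    by (subst (asm) nn_integral_indicator) (simp_all add: Tlaw_sets)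
  then have "AE t in Tlaw K B. 0 \<le> t"
    by (intro AE_I'[of "{..<0}"]) (auto simp: Tlaw_sets)
  then have "ET K B = enn2real (\<integral>\<^sup>+t. ennreal t \<partial>Tlaw K B)"
    unfolding ET_def
  proof (intro integral_eq_nn_integral)
    show "(\<lambda>x. x) \<in> borel_measurable (Tlaw K B)"
      by (subst measurable_cong_sets[OF Tlaw_sets refl]) simp
  qed
  also have "(\<integral>\<^sup>+t. ennreal t \<partial>Tlaw K B) = (\<integral>\<^sup>+z. ennreal (snd z) * indicator (B \<times> {0..}) z \<partial>K) / ennreal (Pk K B)"
    by (rule Tlaw_nn[OF snd B]) simp
  finally show ?thesis .
qed

lemma VarT_eq:
  assumes snd: "snd \<in> K \<rightarrow>\<^sub>M borel" and B: "B \<times> {0..} \<in> sets K"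
  shows "VarT K B = (\<integral>\<^sup>+z. ennreal ((snd z - ET K B)\<^sup>2) * indicator (B \<times> {0..}) z \<partial>K) / ennreal (Pk K B)"
  unfolding VarT_def by (rule Tlaw_nn[OF snd B]) simp

lemma pk_meas:
  fixes pk :: "nat \<Rightarrow> 'a::topological_space \<Rightarrow> real"
  assumes pk: "\<And>k. k < M \<Longrightarrow> pk k \<in> borel_measurable borel"
  shows "(\<lambda>w::('a \<times> real) \<times> nat. ennreal (pk (snd w) (fst (fst w)))) \<in> borel_measurable ((borel \<Otimes>\<^sub>M borel) \<Otimes>\<^sub>M count_space {..<M})"
proof -
  have "(\<lambda>w::('a \<times> real) \<times> nat. (\<lambda>k w. ennreal (pk k (fst (fst w)))) (snd w) w) \<in> borel_measurable ((borel \<Otimes>\<^sub>M borel) \<Otimes>\<^sub>M count_space {..<M})"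
  proof (rule measurable_compose_countable'[where I="{..<M}"])
    fix k assume "k \<in> {..<M}"
    then have [measurable]: "pk k \<in> borel_measurable borel" using pk by simp
    show "(\<lambda>w::('a \<times> real) \<times> nat. ennreal (pk k (fst (fst w)))) \<in> borel_measurable ((borel \<Otimes>\<^sub>M borel) \<Otimes>\<^sub>M count_space {..<M})"
      by measurable
  next
    show "snd \<in> (borel \<Otimes>\<^sub>M borel) \<Otimes>\<^sub>M count_space {..<M} \<rightarrow>\<^sub>M count_space {..<M}"
      by (rule measurable_snd)
  qed simp
  then show ?thesis by simp
qed

lemma Qbar_repr:
  fixes Qx :: "('a::topological_space \<times> real) measure" and pk :: "nat \<Rightarrow> 'a \<Rightarrow> real"
    and Sb :: "'a set" and c :: real
    and F :: "('a \<times> nat) \<times> real \<Rightarrow> ennreal"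
  assumes sQ: "sets Qx = sets (borel \<Otimes>\<^sub>M borel)"
    and pk: "\<And>k. k < M \<Longrightarrow> pk k \<in> borel_measurable borel" and Sb: "Sb \<in> sets borel"
    and F: "F \<in> borel_measurable ((borel \<Otimes>\<^sub>M count_space UNIV) \<Otimes>\<^sub>M borel)"
  shows "integral\<^sup>N (measure_of UNIV (sets ((borel \<Otimes>\<^sub>M count_space UNIV) \<Otimes>\<^sub>M borel))
     (\<lambda>E. (\<integral>\<^sup>+z. indicator (Sb \<times> UNIV) z *
              (\<Sum>k<M. ennreal (pk k (fst z)) * indicator E ((fst z, k), snd z)) \<partial>Qx) / ennreal c)) F
   = (\<integral>\<^sup>+z. indicator (Sb \<times> UNIV) z * (\<Sum>k<M. ennreal (pk k (fst z)) * F ((fst z, k), snd z)) \<partial>Qx) / ennreal c"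
proof -
  define \<Omega> :: "(('a \<times> nat) \<times> real) measure" where "\<Omega> = (borel \<Otimes>\<^sub>M count_space UNIV) \<Otimes>\<^sub>M borel"
  define h :: "('a \<times> real) \<times> nat \<Rightarrow> ennreal"
    where "h = (\<lambda>w. indicator (Sb \<times> UNIV) (fst w) * ennreal (pk (snd w) (fst (fst w))) / ennreal c)"
  define \<phi> :: "('a \<times> real) \<times> nat \<Rightarrow> ('a \<times> nat) \<times> real"
    where "\<phi> = (\<lambda>w. ((fst (fst w), snd w), snd (fst w)))"
  define N where "N = distr (density (Qx \<Otimes>\<^sub>M count_space {..<M}) h) \<Omega> \<phi>"
  have cong: "measurable (Qx \<Otimes>\<^sub>M count_space {..<M}) = measurable ((borel \<Otimes>\<^sub>M borel) \<Otimes>\<^sub>M count_space {..<M})"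
    by (intro ext measurable_cong_sets sets_pair_measure_cong sQ refl)
  have congQ: "measurable Qx = measurable (borel \<Otimes>\<^sub>M borel)"
    by (intro ext measurable_cong_sets sQ refl)
  note pkm[measurable] = pk_meas[OF pk]
  note [measurable] = Sb
  have i1: "(\<lambda>w::('a \<times> real) \<times> nat. indicator (Sb \<times> UNIV) (fst w) :: ennreal) \<in> borel_measurable ((borel \<Otimes>\<^sub>M borel) \<Otimes>\<^sub>M count_space {..<M})"
    by measurable
  have hm: "h \<in> borel_measurable (Qx \<Otimes>\<^sub>M count_space {..<M})"
    unfolding cong h_def
    by (intro borel_measurable_divide_ennreal borel_measurable_times_ennreal i1 pkm measurable_const) auto
  have s1: "(\<lambda>w::('a \<times> real) \<times> nat. snd w) \<in> ((borel \<Otimes>\<^sub>M borel) \<Otimes>\<^sub>M count_space {..<M}) \<rightarrow>\<^sub>M count_space UNIV"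
    by (rule measurable_compose[OF measurable_snd]) (rule measurable_count_space)
  have phim: "\<phi> \<in> Qx \<Otimes>\<^sub>M count_space {..<M} \<rightarrow>\<^sub>M \<Omega>"
    unfolding cong \<phi>_def \<Omega>_def
    by (intro measurable_Pair s1 measurable_compose[OF measurable_fst measurable_fst] measurable_compose[OF measurable_fst measurable_snd])
  have phim': "\<phi> \<in> density (Qx \<Otimes>\<^sub>M count_space {..<M}) h \<rightarrow>\<^sub>M \<Omega>"
    by (subst measurable_cong_sets[OF sets_density refl]) (rule phim)
  have key: "integral\<^sup>N N G = (\<integral>\<^sup>+z. indicator (Sb \<times> UNIV) z * (\<Sum>k<M. ennreal (pk k (fst z)) * G ((fst z, k), snd z)) \<partial>Qx) / ennreal c"
    if G: "G \<in> borel_measurable \<Omega>" for G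
  proof -
    interpret C: finite_measure "count_space {..<M}"
      by (rule finite_measure_count_space) simp
    have Gphi: "(\<lambda>w. h w * G (\<phi> w)) \<in> borel_measurable (Qx \<Otimes>\<^sub>M count_space {..<M})"
      using hm measurable_comp[OF phim G] by (simp add: comp_def)
    have inner: "(\<lambda>z. indicator (Sb \<times> UNIV) z * (\<Sum>k<M. ennreal (pk k (fst z)) * G ((fst z, k), snd z))) \<in> borel_measurable Qx"
    proof -
      have "(\<lambda>z. ennreal (pk k (fst z)) * G ((fst z, k), snd z)) \<in> borel_measurable Qx" if "k < M" for k
      proof -
        note [measurable] = pk[OF that]
        have [measurable]: "G \<in> borel_measurable ((borel \<Otimes>\<^sub>M count_space UNIV) \<Otimes>\<^sub>M borel)"
          using G unfolding \<Omega>_def .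
        show ?thesis unfolding congQ by measurable
      qed
      then show ?thesis unfolding congQ by measurable
    qed
    have "integral\<^sup>N N G = (\<integral>\<^sup>+w. G (\<phi> w) \<partial>density (Qx \<Otimes>\<^sub>M count_space {..<M}) h)"
      unfolding N_def by (rule nn_integral_distr[OF phim']) (use G in simp)
    also have "\<dots> = (\<integral>\<^sup>+w. h w * G (\<phi> w) \<partial>(Qx \<Otimes>\<^sub>M count_space {..<M}))"
      by (rule nn_integral_density[OF hm]) (use measurable_comp[OF phim G] in \<open>simp add: comp_def\<close>)
    also have "\<dots> = (\<integral>\<^sup>+z. \<integral>\<^sup>+k. h (z, k) * G (\<phi> (z, k)) \<partial>count_space {..<M} \<partial>Qx)"
      using C.nn_integral_fst[OF Gphi] by simp
    also have "\<dots> = (\<integral>\<^sup>+z. (indicator (Sb \<times> UNIV) z * (\<Sum>k<M. ennreal (pk k (fst z)) * G ((fst z, k), snd z))) / ennreal c \<partial>Qx)"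
    proof (rule nn_integral_cong)
      fix z :: "'a \<times> real"
      have "(\<integral>\<^sup>+k. h (z, k) * G (\<phi> (z, k)) \<partial>count_space {..<M}) = (\<Sum>k<M. h (z, k) * G (\<phi> (z, k)))"
        by (rule nn_integral_count_space_finite) simp
      also have "\<dots> = (\<Sum>k<M. (indicator (Sb \<times> UNIV) z * (ennreal (pk k (fst z)) * G ((fst z, k), snd z))) / ennreal c)"
        unfolding h_def \<phi>_def by (intro sum.cong refl) (simp add: divide_ennreal_def mult_ac)
      also have "\<dots> = (indicator (Sb \<times> UNIV) z * (\<Sum>k<M. ennreal (pk k (fst z)) * G ((fst z, k), snd z))) / ennreal c"
        by (simp only: divide_ennreal_def sum_distrib_left sum_distrib_right)
      finally show "(\<integral>\<^sup>+k. h (z, k) * G (\<phi> (z, k)) \<partial>count_space {..<M}) = (indicator (Sb \<times> UNIV) z * (\<Sum>k<M. ennreal (pk k (fst z)) * G ((fst z, k), snd z))) / ennreal c" .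
    qed
    also have "\<dots> = (\<integral>\<^sup>+z. indicator (Sb \<times> UNIV) z * (\<Sum>k<M. ennreal (pk k (fst z)) * G ((fst z, k), snd z)) \<partial>Qx) / ennreal c"
      by (rule nn_integral_divide[OF inner])
    finally show ?thesis .
  qed
  have spO: "space \<Omega> = UNIV"
    unfolding \<Omega>_def by (simp add: space_pair_measure)
  have "measure_of UNIV (sets \<Omega>)
     (\<lambda>E. (\<integral>\<^sup>+z. indicator (Sb \<times> UNIV) z *
              (\<Sum>k<M. ennreal (pk k (fst z)) * indicator E ((fst z, k), snd z)) \<partial>Qx) / ennreal c)
     = measure_of UNIV (sets \<Omega>) (emeasure N)"
  proof (rule measure_of_eq)
    show "sets \<Omega> \<subseteq> Pow UNIV" by simp
  next
    fix E assume "E \<in> sigma_sets UNIV (sets \<Omega>)"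
    then have E: "E \<in> sets \<Omega>"
      using sets.sigma_sets_eq[of \<Omega>] spO by simp
    have "emeasure N E = integral\<^sup>N N (indicator E)"
      using E by (simp add: N_def)
    also have "\<dots> = (\<integral>\<^sup>+z. indicator (Sb \<times> UNIV) z *
              (\<Sum>k<M. ennreal (pk k (fst z)) * indicator E ((fst z, k), snd z)) \<partial>Qx) / ennreal c"
      by (rule key) (use E in simp)
    finally show "(\<integral>\<^sup>+z. indicator (Sb \<times> UNIV) z *
              (\<Sum>k<M. ennreal (pk k (fst z)) * indicator E ((fst z, k), snd z)) \<partial>Qx) / ennreal c = emeasure N E"
      by simp
  qed
  also have "\<dots> = N"
    using measure_of_of_measure[of N] spO by (simp add: N_def)
  finally have eqN: "measure_of UNIV (sets \<Omega>)
     (\<lambda>E. (\<integral>\<^sup>+z. indicator (Sb \<times> UNIV) z *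
              (\<Sum>k<M. ennreal (pk k (fst z)) * indicator E ((fst z, k), snd z)) \<partial>Qx) / ennreal c) = N" .
  show ?thesis
    using eqN key[of F] F unfolding \<Omega>_def by simp
qed

lemma sandwich:
  fixes Qx :: "('a::topological_space \<times> real) measure" and g :: "real \<Rightarrow> ennreal"
  assumes sQ: "sets Qx = sets (borel \<Otimes>\<^sub>M borel)" and g: "g \<in> borel_measurable borel"
    and Sb: "Sb \<in> sets borel" and pd: "pd \<in> borel_measurable borel"
    and bnd: "\<And>y. y \<in> Sb \<Longrightarrow> lo \<le> pd y \<and> pd y \<le> hi" and lo: "0 \<le> lo"
  shows "ennreal lo * (\<integral>\<^sup>+z. g (snd z) * indicator (Sb \<times> {0..}) z \<partial>Qx)
           \<le> (\<integral>\<^sup>+z. ennreal (pd (fst z)) * g (snd z) * indicator (Sb \<times> {0..}) z \<partial>Qx)"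
    and "(\<integral>\<^sup>+z. ennreal (pd (fst z)) * g (snd z) * indicator (Sb \<times> {0..}) z \<partial>Qx)
           \<le> ennreal hi * (\<integral>\<^sup>+z. g (snd z) * indicator (Sb \<times> {0..}) z \<partial>Qx)"
proof -
  have congQ: "measurable Qx = measurable (borel \<Otimes>\<^sub>M borel)"
    by (intro ext measurable_cong_sets sQ refl)
  note [measurable] = g Sb
  have m: "(\<lambda>z. g (snd z) * indicator (Sb \<times> {0..}) z) \<in> borel_measurable Qx"
    unfolding congQ by measurable
  show "ennreal lo * (\<integral>\<^sup>+z. g (snd z) * indicator (Sb \<times> {0..}) z \<partial>Qx)
           \<le> (\<integral>\<^sup>+z. ennreal (pd (fst z)) * g (snd z) * indicator (Sb \<times> {0..}) z \<partial>Qx)"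
    unfolding nn_integral_cmult[OF m, symmetric]
  proof (rule nn_integral_mono)
    fix z :: "'a \<times> real"
    show "ennreal lo * (g (snd z) * indicator (Sb \<times> {0..}) z) \<le> ennreal (pd (fst z)) * g (snd z) * indicator (Sb \<times> {0..}) z"
    proof (cases "z \<in> Sb \<times> {0..}")
      case True
      then have "ennreal lo \<le> ennreal (pd (fst z))" using bnd by (auto intro: ennreal_leI)
      then show ?thesis by (simp add: mult.assoc mult_right_mono)
    qed simp
  qed
  show "(\<integral>\<^sup>+z. ennreal (pd (fst z)) * g (snd z) * indicator (Sb \<times> {0..}) z \<partial>Qx)
           \<le> ennreal hi * (\<integral>\<^sup>+z. g (snd z) * indicator (Sb \<times> {0..}) z \<partial>Qx)"
    unfolding nn_integral_cmult[OF m, symmetric]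
  proof (rule nn_integral_mono)
    fix z :: "'a \<times> real"
    show "ennreal (pd (fst z)) * g (snd z) * indicator (Sb \<times> {0..}) z \<le> ennreal hi * (g (snd z) * indicator (Sb \<times> {0..}) z)"
    proof (cases "z \<in> Sb \<times> {0..}")
      case True
      then have "ennreal (pd (fst z)) \<le> ennreal hi" using bnd by (auto intro: ennreal_leI)
      then show ?thesis by (simp add: mult.assoc mult_right_mono)
    qed simp
  qed
qed

lemma eta_up: "0 \<le> (\<eta>::real) \<Longrightarrow> \<eta> \<le> 1/2 \<Longrightarrow> (1 + \<eta>) / (1 - \<eta>) \<le> 1 + 4 * \<eta>"
proof -
  assume a: "0 \<le> \<eta>" "\<eta> \<le> 1/2"
  have "1 + \<eta> \<le> (1 + 4 * \<eta>) * (1 - \<eta>)"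
  proof -
    have "4 * \<eta> * \<eta> \<le> 2 * \<eta>" using a mult_left_mono[of \<eta> "1/2" "4*\<eta>"] by simp
    then show ?thesis by (simp add: algebra_simps)
  qed
  then show ?thesis using a by (simp add: divide_le_eq)
qed

lemma eta_lo: "0 \<le> (\<eta>::real) \<Longrightarrow> \<eta> \<le> 1/2 \<Longrightarrow> 1 - 4 * \<eta> \<le> (1 - \<eta>) / (1 + \<eta>)"
proof -
  assume a: "0 \<le> \<eta>" "\<eta> \<le> 1/2"
  have "(1 - 4 * \<eta>) * (1 + \<eta>) \<le> 1 - \<eta>"
  proof -
    have "0 \<le> \<eta> * \<eta>" using a by simp
    then show ?thesis using a by (simp add: algebra_simps)
  qed
  then show ?thesis using a by (simp add: le_divide_eq)
qed

lemma ratio_est: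
  fixes P Pbd \<eta> I J1 J0 :: real
  assumes P: "P > 0" and Pbd: "Pbd > 0" and e0: "0 \<le> \<eta>" and e1: "\<eta> \<le> 1/2" and I: "I \<ge> 0"
    and j1l: "Pbd * (1 - \<eta>) * I \<le> J1" and j1u: "J1 \<le> Pbd * (1 + \<eta>) * I"
    and j0l: "Pbd * (1 - \<eta>) * P \<le> J0" and j0u: "J0 \<le> Pbd * (1 + \<eta>) * P"
  shows "\<bar>J1 / J0 - I / P\<bar> \<le> 4 * \<eta> * (I / P)"
proof -
  have lp: "Pbd * (1 - \<eta>) * P > 0" using P Pbd e1 by simp
  have J0p: "J0 > 0" using lp j0l by linarith
  have "0 \<le> Pbd * (1 - \<eta>) * I" using I Pbd e1 by simp
  then have J1n: "J1 \<ge> 0" using j1l by linarith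
  have "J1 / J0 \<le> (Pbd * (1 + \<eta>) * I) / (Pbd * (1 - \<eta>) * P)"
    using j1u j0l lp J1n by (intro frac_le) simp_all
  also have "\<dots> = ((1 + \<eta>) / (1 - \<eta>)) * (I / P)"
    using Pbd e1 P by (simp add: field_simps)
  also have "\<dots> \<le> (1 + 4 * \<eta>) * (I / P)"
    by (rule mult_right_mono[OF eta_up[OF e0 e1]]) (use I P in simp)
  finally have u: "J1 / J0 \<le> (1 + 4 * \<eta>) * (I / P)" .
  have "((1 - \<eta>) / (1 + \<eta>)) * (I / P) = (Pbd * (1 - \<eta>) * I) / (Pbd * (1 + \<eta>) * P)"
    using Pbd by (simp add: mult.assoc times_divide_times_eq)
  also have "\<dots> \<le> J1 / J0"
    using j1l j0u J0p J1n by (intro frac_le) simp_all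
  finally have l0: "((1 - \<eta>) / (1 + \<eta>)) * (I / P) \<le> J1 / J0" .
  have "(1 - 4 * \<eta>) * (I / P) \<le> ((1 - \<eta>) / (1 + \<eta>)) * (I / P)"
    by (rule mult_right_mono[OF eta_lo[OF e0 e1]]) (use I P in simp)
  with l0 u show ?thesis by (simp add: abs_le_iff algebra_simps)
qed

lemma ennreal_bounds:
  fixes X :: ennreal
  assumes "ennreal a \<le> X" "X \<le> ennreal b" "0 \<le> a" "0 \<le> b"
  shows "X = ennreal (enn2real X)" "a \<le> enn2real X" "enn2real X \<le> b"
proof -
  have "X < top" using assms(2) ennreal_less_top[of b] by (rule le_less_trans)
  then show X: "X = ennreal (enn2real X)" by simp
  have "ennreal a \<le> ennreal (enn2real X)" using assms(1) X by simp
  then show "a \<le> enn2real X" by (simp add: enn2real_nonneg)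
  have "ennreal (enn2real X) \<le> ennreal b" using assms(2) X by simp
  then show "enn2real X \<le> b" using assms(4) by simp
qed

lemma C_est:
  fixes Qx :: "('a::topological_space \<times> real) measure" and Qb :: "(('a \<times> nat) \<times> real) measure"
    and pd :: "'a \<Rightarrow> real" and d :: nat and Sb :: "'a set"
  assumes sQ: "sets Qx = sets (borel \<Otimes>\<^sub>M borel)" and fQ: "finite_measure Qx"
    and sQb: "sets Qb = sets ((borel \<Otimes>\<^sub>M count_space UNIV) \<Otimes>\<^sub>M borel)"
    and Sb: "Sb \<in> sets borel" and pdm: "pd \<in> borel_measurable borel"
    and QBg: "\<And>g. g \<in> borel_measurable borel \<Longrightarrow>
      (\<integral>\<^sup>+w. g (snd w) * indicator ((Sb \<times> {d}) \<times> {0..}) w \<partial>Qb)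
      = (\<integral>\<^sup>+z. ennreal (pd (fst z)) * g (snd z) * indicator (Sb \<times> {0..}) z \<partial>Qx) / ennreal (Pk Qx Sb)"
    and Ppos: "Pk Qx Sb > 0" and Pbd: "Pbd > 0" and e0: "0 \<le> \<eta>" and e1: "\<eta> \<le> 1/2"
    and close: "\<And>y. y \<in> Sb \<Longrightarrow> \<bar>pd y / Pbd - 1\<bar> \<le> \<eta>"
    and mnz: "ET Qx Sb \<noteq> 0"
  shows "\<bar>ET Qb (Sb \<times> {d}) - ET Qx Sb\<bar> \<le> 4 * \<eta> * ET Qx Sb"
    and "VarT Qb (Sb \<times> {d}) \<le> ennreal 6 * VarT Qx Sb + ennreal (6 * (ET Qx Sb - ET Qb (Sb \<times> {d}))\<^sup>2)"
proof -
  define P where "P = Pk Qx Sb"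
  define A where "A = Sb \<times> {0::real..}"
  define lo where "lo = Pbd * (1 - \<eta>)"
  define hi where "hi = Pbd * (1 + \<eta>)"
  have P0: "P > 0" using Ppos P_def by simp
  have lo0: "lo > 0" using Pbd e1 by (simp add: lo_def)
  have hi0: "hi > 0" using Pbd e0 by (simp add: hi_def)
  have bnd: "lo \<le> pd y \<and> pd y \<le> hi" if "y \<in> Sb" for y
  proof -
    have "\<bar>pd y / Pbd - 1\<bar> \<le> \<eta>" using close that .
    then have "1 - \<eta> \<le> pd y / Pbd" "pd y / Pbd \<le> 1 + \<eta>" by (auto simp: abs_le_iff)
    then show ?thesis using Pbd by (simp add: lo_def hi_def pos_le_divide_eq pos_divide_le_eq mult.commute)
  qed
  have sndQ: "snd \<in> Qx \<rightarrow>\<^sub>M borel"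
    by (subst measurable_cong_sets[OF sQ refl]) (rule measurable_snd)
  have AQ: "Sb \<times> {0..} \<in> sets Qx"
    unfolding sQ by (intro pair_measureI Sb) simp
  have sndQb: "snd \<in> Qb \<rightarrow>\<^sub>M borel"
    by (subst measurable_cong_sets[OF sQb refl]) (rule measurable_snd)
  have AQb: "(Sb \<times> {d}) \<times> {0..} \<in> sets Qb"
    unfolding sQb by (intro pair_measureI Sb) simp_all
  note sw = sandwich[OF sQ _ Sb pdm bnd less_imp_le[OF lo0]]
  have I0: "(\<integral>\<^sup>+z. indicator (Sb \<times> {0..}) z \<partial>Qx) = ennreal P"
    using nn_integral_indicator[OF AQ] finite_measure.emeasure_eq_measure[OF fQ]
    by (simp add: P_def Pk_def)
  define J0 where "J0 = (\<integral>\<^sup>+z. ennreal (pd (fst z)) * indicator (Sb \<times> {0..}) z \<partial>Qx)"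
  have "ennreal lo * ennreal P \<le> J0" "J0 \<le> ennreal hi * ennreal P"
    using sw(1)[of "\<lambda>_. 1"] sw(2)[of "\<lambda>_. 1"] I0 by (simp_all add: J0_def)
  then have "ennreal (lo * P) \<le> J0" "J0 \<le> ennreal (hi * P)"
    using lo0 hi0 P0 by (simp_all add: ennreal_mult)
  note J0b = ennreal_bounds[OF this] 
  define J0r where "J0r = enn2real J0"
  have J0e: "J0 = ennreal J0r" and J0l: "lo * P \<le> J0r" and J0u: "J0r \<le> hi * P"
    using J0b lo0 hi0 P0 by (simp_all add: J0r_def)
  have J0p: "J0r > 0" using J0l lo0 P0 by (smt (verit) mult_pos_pos)
  have PkQb: "Pk Qb (Sb \<times> {d}) = J0r / P"
  proof -
    have "emeasure Qb ((Sb \<times> {d}) \<times> {0..}) = (\<integral>\<^sup>+w. (\<lambda>_. 1) (snd w) * indicator ((Sb \<times> {d}) \<times> {0..}) w \<partial>Qb)"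
      using nn_integral_indicator[OF AQb] by simp
    also have "\<dots> = J0 / ennreal P"
      by (subst QBg) (simp_all add: J0_def P_def)
    also have "\<dots> = ennreal (J0r / P)"
      using J0e J0p P0 by (simp add: divide_ennreal)
    finally show ?thesis
      using J0p P0 by (simp add: Pk_def measure_def)
  qed
  define I1 where "I1 = (\<integral>\<^sup>+z. ennreal (snd z) * indicator (Sb \<times> {0..}) z \<partial>Qx)"
  have m_eq: "ET Qx Sb = enn2real (I1 / ennreal P)"
    unfolding I1_def P_def by (rule ET_eq[OF sndQ AQ])
  have I1fin: "I1 \<noteq> top"
  proof
    assume "I1 = top"
    then have "ET Qx Sb = 0" using m_eq P0 by (simp add: ennreal_top_divide)
    with mnz show False by simp
  qed
  define I1r where "I1r = enn2real I1"
  have I1e: "I1 = ennreal I1r" using I1fin by (simp add: I1r_def less_top)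
  have I1n: "I1r \<ge> 0" by (simp add: I1r_def enn2real_nonneg)
  have m_val: "ET Qx Sb = I1r / P"
    using m_eq I1e I1n P0 by (simp add: divide_ennreal)
  define J1 where "J1 = (\<integral>\<^sup>+z. ennreal (pd (fst z)) * ennreal (snd z) * indicator (Sb \<times> {0..}) z \<partial>Qx)"
  have "ennreal lo * I1 \<le> J1" "J1 \<le> ennreal hi * I1"
    using sw(1)[of ennreal] sw(2)[of ennreal] by (simp_all add: J1_def I1_def)
  then have "ennreal (lo * I1r) \<le> J1" "J1 \<le> ennreal (hi * I1r)"
    using lo0 hi0 I1n I1e by (simp_all add: ennreal_mult)
  note J1b = ennreal_bounds[OF this]
  define J1r where "J1r = enn2real J1"
  have J1e: "J1 = ennreal J1r" and J1l: "lo * I1r \<le> J1r" and J1u: "J1r \<le> hi * I1r"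
    using J1b lo0 hi0 I1n by (simp_all add: J1r_def)
  have J1n: "J1r \<ge> 0" by (simp add: J1r_def enn2real_nonneg)
  have mb_val: "ET Qb (Sb \<times> {d}) = J1r / J0r"
  proof -
    have "ET Qb (Sb \<times> {d}) = enn2real ((\<integral>\<^sup>+w. ennreal (snd w) * indicator ((Sb \<times> {d}) \<times> {0..}) w \<partial>Qb) / ennreal (Pk Qb (Sb \<times> {d})))"
      by (rule ET_eq[OF sndQb AQb])
    also have "(\<integral>\<^sup>+w. ennreal (snd w) * indicator ((Sb \<times> {d}) \<times> {0..}) w \<partial>Qb) = J1 / ennreal P"
      by (subst QBg) (simp_all add: J1_def P_def)
    also have "J1 / ennreal P = ennreal (J1r / P)"
      using J1e J1n P0 by (simp add: divide_ennreal)
    also have "ennreal (J1r / P) / ennreal (Pk Qb (Sb \<times> {d})) = ennreal ((J1r / P) / (J0r / P))"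
      unfolding PkQb using J1n P0 J0p by (intro divide_ennreal) simp_all
    finally show ?thesis using J1n P0 J0p by simp
  qed
  show "\<bar>ET Qb (Sb \<times> {d}) - ET Qx Sb\<bar> \<le> 4 * \<eta> * ET Qx Sb"
    unfolding mb_val m_val
    by (rule ratio_est[OF P0 Pbd e0 e1 I1n]) (use J1l J1u J0l J0u in \<open>simp_all add: lo_def hi_def\<close>)
  define m where "m = ET Qx Sb"
  define mb where "mb = ET Qb (Sb \<times> {d})"
  define U where "U = (\<integral>\<^sup>+z. ennreal ((snd z - m)\<^sup>2) * indicator (Sb \<times> {0..}) z \<partial>Qx)"
  have V_eq: "VarT Qx Sb = U / ennreal P"
    unfolding U_def P_def m_def by (rule VarT_eq[OF sndQ AQ])
  define Wp where "Wp = (\<integral>\<^sup>+z. ennreal (pd (fst z)) * ennreal ((snd z - mb)\<^sup>2) * indicator (Sb \<times> {0..}) z \<partial>Qx)"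
  have Vb_eq: "VarT Qb (Sb \<times> {d}) = (Wp / ennreal P) / ennreal (J0r / P)"
  proof -
    have "VarT Qb (Sb \<times> {d}) = (\<integral>\<^sup>+w. ennreal ((snd w - mb)\<^sup>2) * indicator ((Sb \<times> {d}) \<times> {0..}) w \<partial>Qb) / ennreal (Pk Qb (Sb \<times> {d}))"
      unfolding mb_def by (rule VarT_eq[OF sndQb AQb])
    also have "(\<integral>\<^sup>+w. ennreal ((snd w - mb)\<^sup>2) * indicator ((Sb \<times> {d}) \<times> {0..}) w \<partial>Qb) = Wp / ennreal P"
      by (subst QBg[where g="\<lambda>t. ennreal ((t - mb)\<^sup>2)"]) (simp_all add: Wp_def P_def)
    finally show ?thesis unfolding PkQb .
  qed
  define W where "W = (\<integral>\<^sup>+z. ennreal ((snd z - mb)\<^sup>2) * indicator (Sb \<times> {0..}) z \<partial>Qx)"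
  have WpW: "Wp \<le> ennreal hi * W"
    using sw(2)[of "\<lambda>t. ennreal ((t - mb)\<^sup>2)"] by (simp add: Wp_def W_def)
  have WU: "W \<le> 2 * U + ennreal (2 * (m - mb)\<^sup>2 * P)"
  proof -
    have mU: "(\<lambda>z. ennreal ((snd z - m)\<^sup>2) * indicator (Sb \<times> {0..}) z) \<in> borel_measurable Qx"
      using sndQ AQ by measurable
    have mI: "(\<lambda>z. indicator (Sb \<times> {0..}) z :: ennreal) \<in> borel_measurable Qx"
      using AQ by measurable
    have "W \<le> (\<integral>\<^sup>+z. 2 * (ennreal ((snd z - m)\<^sup>2) * indicator (Sb \<times> {0..}) z) + ennreal (2 * (m - mb)\<^sup>2) * indicator (Sb \<times> {0..}) z \<partial>Qx)"
      unfolding W_def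
    proof (rule nn_integral_mono)
      fix z :: "'a \<times> real"
      have r: "(snd z - mb)\<^sup>2 \<le> 2 * (snd z - m)\<^sup>2 + 2 * (m - mb)\<^sup>2"
      proof -
        have "0 \<le> ((snd z - m) - (m - mb))\<^sup>2" by simp
        moreover have "(snd z - mb)\<^sup>2 = ((snd z - m) + (m - mb))\<^sup>2" by simp
        ultimately show ?thesis unfolding power2_diff[of "snd z - m" "m - mb"] power2_sum[of "snd z - m" "m - mb"] by linarith
      qed
      have "ennreal ((snd z - mb)\<^sup>2) \<le> ennreal (2 * (snd z - m)\<^sup>2 + 2 * (m - mb)\<^sup>2)"
        using r by (rule ennreal_leI)
      also have "\<dots> = 2 * ennreal ((snd z - m)\<^sup>2) + ennreal (2 * (m - mb)\<^sup>2)"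
      proof -
        have a: "ennreal (2 * (snd z - m)\<^sup>2 + 2 * (m - mb)\<^sup>2) = ennreal (2 * (snd z - m)\<^sup>2) + ennreal (2 * (m - mb)\<^sup>2)"
          by (rule ennreal_plus) simp_all
        have b: "ennreal (2 * (snd z - m)\<^sup>2) = 2 * ennreal ((snd z - m)\<^sup>2)"
          using ennreal_mult[of 2 "(snd z - m)\<^sup>2"] by simp
        show ?thesis unfolding a b ..
      qed
      finally have "ennreal ((snd z - mb)\<^sup>2) \<le> 2 * ennreal ((snd z - m)\<^sup>2) + ennreal (2 * (m - mb)\<^sup>2)" .
      then show "ennreal ((snd z - mb)\<^sup>2) * indicator (Sb \<times> {0..}) z \<le> 2 * (ennreal ((snd z - m)\<^sup>2) * indicator (Sb \<times> {0..}) z) + ennreal (2 * (m - mb)\<^sup>2) * indicator (Sb \<times> {0..}) z"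
        by (cases "z \<in> Sb \<times> {0..}") simp_all
    qed
    also have "\<dots> = 2 * U + ennreal (2 * (m - mb)\<^sup>2) * ennreal P"
      using mU mI I0 by (simp add: nn_integral_add nn_integral_cmult U_def)
    also have "\<dots> = 2 * U + ennreal (2 * (m - mb)\<^sup>2 * P)"
      using P0 by (simp add: ennreal_mult)
    finally show ?thesis .
  qed
  show "VarT Qb (Sb \<times> {d}) \<le> ennreal 6 * VarT Qx Sb + ennreal (6 * (ET Qx Sb - ET Qb (Sb \<times> {d}))\<^sup>2)"
  proof (cases "U = top")
    case True
    then have "VarT Qx Sb = top" using V_eq P0 by (simp add: ennreal_top_divide)
    then show ?thesis by (simp add: ennreal_mult_top)
  next
    case False
    define Ur where "Ur = enn2real U"
    have Ue: "U = ennreal Ur" using False by (simp add: Ur_def less_top)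
    have Un: "Ur \<ge> 0" by (simp add: Ur_def enn2real_nonneg)
    define X where "X = hi * (2 * Ur + 2 * (m - mb)\<^sup>2 * P)"
    have Xn: "X \<ge> 0" using hi0 Un P0 by (simp add: X_def)
    have "Wp \<le> ennreal hi * (2 * ennreal Ur + ennreal (2 * (m - mb)\<^sup>2 * P))"
      using WpW WU Ue by (meson dual_order.trans mult_left_mono zero_le)
    also have "\<dots> = ennreal X"
    proof -
      have a: "ennreal (2 * Ur + 2 * (m - mb)\<^sup>2 * P) = ennreal (2 * Ur) + ennreal (2 * (m - mb)\<^sup>2 * P)"
        by (rule ennreal_plus) (use Un P0 in simp_all)
      have b: "ennreal (2 * Ur) = 2 * ennreal Ur"
        using ennreal_mult[of 2 Ur] Un by simp
      have c: "ennreal X = ennreal hi * ennreal (2 * Ur + 2 * (m - mb)\<^sup>2 * P)"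
        unfolding X_def by (rule ennreal_mult) (use hi0 Un P0 in simp_all)
      show ?thesis unfolding c a b ..
    qed
    finally have WpX: "Wp \<le> ennreal X" .
    have Wfin: "Wp < top" using WpX ennreal_less_top[of X] by (rule le_less_trans)
    define Wr where "Wr = enn2real Wp"
    have Wpe: "Wp = ennreal Wr" using Wfin by (simp add: Wr_def)
    have Wrn: "Wr \<ge> 0" by (simp add: Wr_def enn2real_nonneg)
    have Wr_le: "Wr \<le> X" using WpX Xn unfolding Wpe by simp
    have Vb_val: "VarT Qb (Sb \<times> {d}) = ennreal (Wr / J0r)"
      using Vb_eq Wpe Wrn P0 J0p by (simp add: divide_ennreal)
    have V_val: "VarT Qx Sb = ennreal (Ur / P)"
      using V_eq Ue Un P0 by (simp add: divide_ennreal)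
    have "Wr / J0r \<le> X / (lo * P)"
      using Wr_le J0l Xn lo0 P0 by (intro frac_le) simp_all
    also have "\<dots> = (hi / lo) * (2 * Ur / P + 2 * (m - mb)\<^sup>2)"
      using lo0 P0 by (simp add: X_def field_simps)
    also have "\<dots> \<le> 3 * (2 * Ur / P + 2 * (m - mb)\<^sup>2)"
    proof (rule mult_right_mono)
      have "hi / lo = (1 + \<eta>) / (1 - \<eta>)" using Pbd by (simp add: hi_def lo_def)
      also have "\<dots> \<le> 1 + 4 * \<eta>" by (rule eta_up[OF e0 e1])
      finally show "hi / lo \<le> 3" using e1 by simp
    qed (use Un P0 in simp)
    also have "\<dots> = 6 * (Ur / P) + 6 * (m - mb)\<^sup>2" by simp
    finally have "Wr / J0r \<le> 6 * (Ur / P) + 6 * (m - mb)\<^sup>2" .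
    then have "ennreal (Wr / J0r) \<le> ennreal (6 * (Ur / P) + 6 * (m - mb)\<^sup>2)"
      by (rule ennreal_leI)
    also have "\<dots> = ennreal 6 * ennreal (Ur / P) + ennreal (6 * (m - mb)\<^sup>2)"
    proof -
      have a: "ennreal (6 * (Ur / P) + 6 * (m - mb)\<^sup>2) = ennreal (6 * (Ur / P)) + ennreal (6 * (m - mb)\<^sup>2)"
        by (rule ennreal_plus) (use Un P0 in simp_all)
      have b: "ennreal (6 * (Ur / P)) = ennreal 6 * ennreal (Ur / P)"
        by (rule ennreal_mult) (use Un P0 in simp_all)
      show ?thesis unfolding a b ..
    qed
    finally show ?thesis unfolding Vb_val V_val m_def mb_def by simp
  qed
qed

lemma ET_nonneg:
  assumes snd: "snd \<in> K \<rightarrow>\<^sub>M borel" and B: "B \<times> {0..} \<in> sets K"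
  shows "ET K B \<ge> 0"
  unfolding ET_eq[OF snd B] by (simp add: enn2real_nonneg)

lemma pk_measurable:
  fixes Q :: "real \<Rightarrow> 'a::topological_space \<Rightarrow> ('a \<times> real) measure"
  assumes Qk: "Q \<epsilon> \<in> borel \<rightarrow>\<^sub>M subprob_algebra (borel \<Otimes>\<^sub>M borel)" and S: "S \<in> sets borel"
  shows "(\<lambda>y. Pk (Q \<epsilon> y) S) \<in> borel_measurable borel"
proof -
  have "S \<times> {0::real..} \<in> sets (borel \<Otimes>\<^sub>M borel)" by (intro pair_measureI S) simp
  then show ?thesis
    unfolding Pk_def by (rule measurable_compose[OF Qk measurable_measure_subprob_algebra])
qed

lemma QBg_Qbar:
  fixes Q :: "real \<Rightarrow> 'a::topological_space \<Rightarrow> ('a \<times> real) measure"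
  assumes Qk: "Q \<epsilon> \<in> borel \<rightarrow>\<^sub>M subprob_algebra (borel \<Otimes>\<^sub>M borel)"
    and Sp: "\<forall>i<M. Sp i \<in> sets borel" and b: "b < M" and d: "d < M"
    and g: "g \<in> borel_measurable borel"
  shows "(\<integral>\<^sup>+w. g (snd w) * indicator ((Sp b \<times> {d}) \<times> {0..}) w \<partial>Qbar Q Sp M \<epsilon> (x, b))
      = (\<integral>\<^sup>+z. ennreal (Pk (Q \<epsilon> (fst z)) (Sp d)) * g (snd z) * indicator (Sp b \<times> {0..}) z \<partial>Q \<epsilon> x) / ennreal (Pk (Q \<epsilon> x) (Sp b))"
proof -
  have sQ: "sets (Q \<epsilon> x) = sets (borel \<Otimes>\<^sub>M borel)"
    by (rule sets_kernel[OF Qk]) simp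
  have pk: "\<And>k. k < M \<Longrightarrow> (\<lambda>y. Pk (Q \<epsilon> y) (Sp k)) \<in> borel_measurable borel"
    using Sp by (intro pk_measurable[of Q \<epsilon>, OF Qk]) simp
  have Sb: "Sp b \<in> sets borel" using Sp b by simp
  have set: "(Sp b \<times> {d}) \<times> {0::real..} \<in> sets ((borel \<Otimes>\<^sub>M count_space UNIV) \<Otimes>\<^sub>M borel)"
    by (intro pair_measureI Sb) simp_all
  have F: "(\<lambda>w. g (snd w) * indicator ((Sp b \<times> {d}) \<times> {0..}) w) \<in> borel_measurable ((borel \<Otimes>\<^sub>M count_space UNIV) \<Otimes>\<^sub>M borel)"
    by (intro borel_measurable_times_ennreal measurable_compose[OF measurable_snd g] borel_measurable_indicator set)
  have "(\<integral>\<^sup>+w. g (snd w) * indicator ((Sp b \<times> {d}) \<times> {0..}) w \<partial>Qbar Q Sp M \<epsilon> (x, b))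
    = (\<integral>\<^sup>+z. indicator (Sp b \<times> UNIV) z * (\<Sum>k<M. ennreal (Pk (Q \<epsilon> (fst z)) (Sp k)) * (g (snd z) * indicator ((Sp b \<times> {d}) \<times> {0..}) ((fst z, k), snd z))) \<partial>Q \<epsilon> x) / ennreal (Pk (Q \<epsilon> x) (Sp b))"
    unfolding Qbar_def fst_conv snd_conv
    by (rule Qbar_repr[OF sQ pk Sb F, unfolded snd_conv])
  also have "\<dots> = (\<integral>\<^sup>+z. ennreal (Pk (Q \<epsilon> (fst z)) (Sp d)) * g (snd z) * indicator (Sp b \<times> {0..}) z \<partial>Q \<epsilon> x) / ennreal (Pk (Q \<epsilon> x) (Sp b))"
  proof -
    have "indicator (Sp b \<times> UNIV) z * (\<Sum>k<M. ennreal (Pk (Q \<epsilon> (fst z)) (Sp k)) * (g (snd z) * indicator ((Sp b \<times> {d}) \<times> {0..}) ((fst z, k), snd z)))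
       = ennreal (Pk (Q \<epsilon> (fst z)) (Sp d)) * g (snd z) * indicator (Sp b \<times> {0..}) z" for z :: "'a \<times> real"
    proof -
      have "(\<Sum>k<M. ennreal (Pk (Q \<epsilon> (fst z)) (Sp k)) * (g (snd z) * indicator ((Sp b \<times> {d}) \<times> {0..}) ((fst z, k), snd z)))
          = (\<Sum>k<M. if k = d then ennreal (Pk (Q \<epsilon> (fst z)) (Sp d)) * (g (snd z) * indicator (Sp b \<times> {0..}) z) else 0)"
        by (intro sum.cong refl) (cases z, auto simp: indicator_def)
      also have "\<dots> = ennreal (Pk (Q \<epsilon> (fst z)) (Sp d)) * (g (snd z) * indicator (Sp b \<times> {0..}) z)"
        using d by (simp add: sum.delta)
      finally show ?thesis
        by (auto simp: indicator_def mult.assoc)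
    qed
    then show ?thesis by simp
  qed
  finally show ?thesis .
qed

lemma final_real:
  fixes mb m t \<eta> \<delta> :: real
  assumes "\<bar>mb - m\<bar> \<le> 4 * \<eta> * m" "m \<ge> 0" "\<bar>m / t - 1\<bar> < \<delta>" "\<delta> \<le> 1/2" "\<eta> \<ge> 0"
  shows "\<bar>mb / t - 1\<bar> < 6 * \<eta> + \<delta>"
proof -
  have t: "t \<noteq> 0" using assms(3,4) by auto
  have r: "\<bar>m / t\<bar> \<le> 3/2" using assms(3,4) by linarith
  have "\<bar>mb / t - m / t\<bar> = \<bar>mb - m\<bar> / \<bar>t\<bar>" using t by (simp add: diff_divide_distrib[symmetric] abs_divide)
  also have "\<dots> \<le> 4 * \<eta> * m / \<bar>t\<bar>" using assms(1) by (simp add: divide_right_mono)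
  also have "\<dots> = 4 * \<eta> * \<bar>m / t\<bar>" using assms(2) by (simp add: abs_divide)
  also have "\<dots> \<le> 4 * \<eta> * (3/2)" using r assms(5) by (intro mult_left_mono) simp_all
  finally have "\<bar>mb / t - m / t\<bar> \<le> 6 * \<eta>" by simp
  then show ?thesis using assms(3) by linarith
qed

lemma sets_Qbar: "sets (Qbar Q Sp M \<epsilon> xb) = sets ((borel \<Otimes>\<^sub>M count_space UNIV) \<Otimes>\<^sub>M borel)"
proof -
  define \<Omega> where "\<Omega> = ((borel \<Otimes>\<^sub>M count_space UNIV) \<Otimes>\<^sub>M (borel::real measure) :: (('a::topological_space \<times> nat) \<times> real) measure)"
  have sp: "space \<Omega> = UNIV"
    by (simp add: space_pair_measure \<Omega>_def)
  have sig: "sigma_sets UNIV (sets \<Omega>) = sets \<Omega>"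
    using sets.sigma_sets_eq[of \<Omega>] by (simp only: sp)
  have "sets (measure_of UNIV (sets \<Omega>) \<mu>) = sets \<Omega>" for \<mu>
    using sets_measure_of[of "sets \<Omega>" "UNIV"] sig by simp
  then show ?thesis
    unfolding Qbar_def \<Omega>_def .
qed

lemma key_point:
  fixes Q :: "real \<Rightarrow> 'a::metric_space \<Rightarrow> ('a \<times> real) measure"
  assumes Qk: "Q \<epsilon> \<in> borel \<rightarrow>\<^sub>M subprob_algebra (borel \<Otimes>\<^sub>M borel)"
    and fQ: "finite_measure (Q \<epsilon> x)"
    and Sp: "\<forall>i<M. Sp i \<in> sets borel" and b: "b < M" and d: "d < M"
    and Ppos: "Pk (Q \<epsilon> x) (Sp b) > 0" and Pbd: "P \<epsilon> b d > 0" and e0: "0 \<le> \<eta>" and e1: "\<eta> \<le> 1/2"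
    and close: "\<And>y. y \<in> Sp b \<Longrightarrow> \<bar>Pk (Q \<epsilon> y) (Sp d) / P \<epsilon> b d - 1\<bar> \<le> \<eta>"
    and mnz: "ET (Q \<epsilon> x) (Sp b) \<noteq> 0"
  shows "\<bar>ET (Qbar Q Sp M \<epsilon> (x, b)) (Sp b \<times> {d}) - ET (Q \<epsilon> x) (Sp b)\<bar> \<le> 4 * \<eta> * ET (Q \<epsilon> x) (Sp b)"
    and "VarT (Qbar Q Sp M \<epsilon> (x, b)) (Sp b \<times> {d}) \<le> ennreal 6 * VarT (Q \<epsilon> x) (Sp b)
          + ennreal (6 * (ET (Q \<epsilon> x) (Sp b) - ET (Qbar Q Sp M \<epsilon> (x, b)) (Sp b \<times> {d}))\<^sup>2)"
    and "ET (Q \<epsilon> x) (Sp b) \<ge> 0"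
proof -
  have sQ: "sets (Q \<epsilon> x) = sets (borel \<Otimes>\<^sub>M borel)"
    by (rule sets_kernel[OF Qk]) simp
  have Sb: "Sp b \<in> sets borel" using Sp b by simp
  have Sd: "Sp d \<in> sets borel" using Sp d by simp
  have pdm: "(\<lambda>y. Pk (Q \<epsilon> y) (Sp d)) \<in> borel_measurable borel"
    by (rule pk_measurable[of Q \<epsilon>, OF Qk Sd])
  note QBg = QBg_Qbar[of Q \<epsilon> M Sp b d _ x, OF Qk Sp b d]
  note CE = C_est[OF sQ fQ sets_Qbar Sb pdm QBg Ppos Pbd e0 e1 close mnz]
  show "\<bar>ET (Qbar Q Sp M \<epsilon> (x, b)) (Sp b \<times> {d}) - ET (Q \<epsilon> x) (Sp b)\<bar> \<le> 4 * \<eta> * ET (Q \<epsilon> x) (Sp b)"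
    by (rule CE(1))
  show "VarT (Qbar Q Sp M \<epsilon> (x, b)) (Sp b \<times> {d}) \<le> ennreal 6 * VarT (Q \<epsilon> x) (Sp b)
          + ennreal (6 * (ET (Q \<epsilon> x) (Sp b) - ET (Qbar Q Sp M \<epsilon> (x, b)) (Sp b \<times> {d}))\<^sup>2)"
    by (rule CE(2))
  have sndQ: "snd \<in> Q \<epsilon> x \<rightarrow>\<^sub>M borel"
    by (subst measurable_cong_sets[OF sQ refl]) (rule measurable_snd)
  have AQ: "Sp b \<times> {0..} \<in> sets (Q \<epsilon> x)"
    unfolding sQ by (intro pair_measureI Sb) simp
  show "ET (Q \<epsilon> x) (Sp b) \<ge> 0" by (rule ET_nonneg[OF sndQ AQ])
qed

theorem lemma4p1:
  fixes Q :: "real \<Rightarrow> 'a::metric_space \<Rightarrow> ('a \<times> real) measure"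
    and Sp :: "nat \<Rightarrow> 'a set" and M :: nat
    and P :: "real \<Rightarrow> nat \<Rightarrow> nat \<Rightarrow> real"
    and tau :: "real \<Rightarrow> nat \<Rightarrow> nat \<Rightarrow> real"
  assumes part_borel: "\<forall>i<M. Sp i \<in> sets borel"
    and part_disj: "disjoint_family_on Sp {..<M}"
    and part_cover: "(\<Union>i<M. Sp i) = UNIV"
    and Q_kernel: "\<forall>\<epsilon>>0. Q \<epsilon> \<in> borel \<rightarrow>\<^sub>M subprob_algebra (borel \<Otimes>\<^sub>M borel)"
    and Q_prob: "\<forall>\<epsilon>>0. \<forall>x. prob_space (Q \<epsilon> x)"
    and Q_support: "\<forall>\<epsilon>>0. \<forall>x. emeasure (Q \<epsilon> x) (UNIV \<times> {..<0}) = 0"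
    and cond_i: "\<forall>\<epsilon>>0. \<forall>i<M. \<forall>x\<in>Sp i. Pk (Q \<epsilon> x) (Sp i) = 0"
    and cond_ii: "\<forall>i<M. \<forall>j<M. i \<noteq> j \<longrightarrow>
        ((\<forall>\<epsilon>>0. \<forall>x\<in>Sp i. Pk (Q \<epsilon> x) (Sp j) = 0) \<and> (\<forall>\<epsilon>>0. P \<epsilon> i j = 0))
      \<or> ((\<forall>\<epsilon>>0. \<forall>x\<in>Sp i. Pk (Q \<epsilon> x) (Sp j) > 0) \<and> (\<forall>\<epsilon>>0. P \<epsilon> i j > 0) \<and>
         uniform_limit (Sp i) (\<lambda>\<epsilon> x. Pk (Q \<epsilon> x) (Sp j) / P \<epsilon> i j) (\<lambda>_. 1) (at_right 0))"
    and cond_ii_sum: "\<forall>\<epsilon>>0. \<forall>i<M. (\<Sum>j\<in>{..<M} - {i}. P \<epsilon> i j) = 1"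
    and cond_iii: "\<forall>i<M. \<forall>j<M. i \<noteq> j \<longrightarrow>
        (i, j) \<in> {(a, b). a < M \<and> b < M \<and> a \<noteq> b \<and> not_ident_zero (\<lambda>\<epsilon>. P \<epsilon> a b)}\<^sup>+"
    and cond_iv: "\<forall>i<M. \<forall>j<M. i \<noteq> j \<and> not_ident_zero (\<lambda>\<epsilon>. P \<epsilon> i j) \<longrightarrow>
        uniform_limit (Sp i) (\<lambda>\<epsilon> x. ET (Q \<epsilon> x) (Sp j) / tau \<epsilon> i j) (\<lambda>_. 1) (at_right 0)"
    and cond_v: "\<exists>C \<epsilon>0. \<epsilon>0 > 0 \<and> (\<forall>i<M. \<forall>j<M. \<forall>\<epsilon>. \<forall>x\<in>Sp i.
        i \<noteq> j \<and> not_ident_zero (\<lambda>\<epsilon>. P \<epsilon> i j) \<and> 0 < \<epsilon> \<and> \<epsilon> \<le> \<epsilon>0 \<longrightarrow>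
        VarT (Q \<epsilon> x) (Sp j) \<le> ennreal (C * (tau \<epsilon> i j)\<^sup>2))"
  shows "\<exists>taubar :: real \<Rightarrow> nat \<times> nat \<Rightarrow> real.
     (\<forall>a<M. \<forall>b<M. \<forall>c<M. \<forall>d<M.
        a \<noteq> b \<and> not_ident_zero (\<lambda>\<epsilon>. P \<epsilon> a b) \<and>
        c \<noteq> d \<and> not_ident_zero (\<lambda>\<epsilon>. P \<epsilon> c d) \<and>
        not_ident_zero (\<lambda>\<epsilon>. Pbar P \<epsilon> (a, b) (c, d)) \<longrightarrow>
        uniform_limit (Sp a \<times> {b})
          (\<lambda>\<epsilon> xb. ET (Qbar Q Sp M \<epsilon> xb) (Sp c \<times> {d}) / taubar \<epsilon> (a, b)) (\<lambda>_. 1) (at_right 0))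
   \<and> (\<exists>C \<epsilon>0. C > 0 \<and> \<epsilon>0 > 0 \<and>
        (\<forall>a<M. \<forall>b<M. \<forall>c<M. \<forall>d<M. \<forall>\<epsilon>. \<forall>xb\<in>Sp a \<times> {b}.
          a \<noteq> b \<and> not_ident_zero (\<lambda>\<epsilon>. P \<epsilon> a b) \<and>
          c \<noteq> d \<and> not_ident_zero (\<lambda>\<epsilon>. P \<epsilon> c d) \<and>
          not_ident_zero (\<lambda>\<epsilon>. Pbar P \<epsilon> (a, b) (c, d)) \<and> 0 < \<epsilon> \<and> \<epsilon> \<le> \<epsilon>0 \<longrightarrow>
          VarT (Qbar Q Sp M \<epsilon> xb) (Sp c \<times> {d}) \<le> ennreal (C * (taubar \<epsilon> (a, b))\<^sup>2)))"
proof -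
  have Qk: "Q \<epsilon> \<in> borel \<rightarrow>\<^sub>M subprob_algebra (borel \<Otimes>\<^sub>M borel)" if "\<epsilon> > 0" for \<epsilon>
    using Q_kernel that by blast
  have fQ: "finite_measure (Q \<epsilon> x)" if "\<epsilon> > 0" for \<epsilon> x
    using Q_prob that unfolding prob_space_def by blast
  have F1: "(\<forall>\<epsilon>>0. \<forall>x\<in>Sp i. Pk (Q \<epsilon> x) (Sp j) > 0) \<and> (\<forall>\<epsilon>>0. P \<epsilon> i j > 0) \<and>
         uniform_limit (Sp i) (\<lambda>\<epsilon> x. Pk (Q \<epsilon> x) (Sp j) / P \<epsilon> i j) (\<lambda>_. 1) (at_right 0)"
    if "i < M" "j < M" "i \<noteq> j" "not_ident_zero (\<lambda>\<epsilon>. P \<epsilon> i j)" for i j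
  proof -
    have "\<not> (\<forall>\<epsilon>>0. P \<epsilon> i j = 0)" using that(4) unfolding not_ident_zero_def by blast
    then show ?thesis using cond_ii that(1-3) by blast
  qed
  have F2: "b = c" if "not_ident_zero (\<lambda>\<epsilon>. Pbar P \<epsilon> (a, b) (c, d))" for a b c d
    using that unfolding not_ident_zero_def Pbar_def by (auto split: if_splits)
  have part_borel': "\<forall>i<M. Sp i \<in> sets borel" using part_borel .
  define taubar :: "real \<Rightarrow> nat \<times> nat \<Rightarrow> real" where "taubar = (\<lambda>\<epsilon> ab. tau \<epsilon> (fst ab) (snd ab))"
  have part1: "\<forall>a<M. \<forall>b<M. \<forall>c<M. \<forall>d<M.
        a \<noteq> b \<and> not_ident_zero (\<lambda>\<epsilon>. P \<epsilon> a b) \<and>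
        c \<noteq> d \<and> not_ident_zero (\<lambda>\<epsilon>. P \<epsilon> c d) \<and>
        not_ident_zero (\<lambda>\<epsilon>. Pbar P \<epsilon> (a, b) (c, d)) \<longrightarrow>
        uniform_limit (Sp a \<times> {b})
          (\<lambda>\<epsilon> xb. ET (Qbar Q Sp M \<epsilon> xb) (Sp c \<times> {d}) / taubar \<epsilon> (a, b)) (\<lambda>_. 1) (at_right 0)"
  proof (intro allI impI)
    fix a b c d
    assume lt: "a < M" "b < M" "c < M" "d < M"
      and H: "a \<noteq> b \<and> not_ident_zero (\<lambda>\<epsilon>. P \<epsilon> a b) \<and>
        c \<noteq> d \<and> not_ident_zero (\<lambda>\<epsilon>. P \<epsilon> c d) \<and> not_ident_zero (\<lambda>\<epsilon>. Pbar P \<epsilon> (a, b) (c, d))"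
    have cb: "c = b" using F2 H by metis
    have bd: "b \<noteq> d" "not_ident_zero (\<lambda>\<epsilon>. P \<epsilon> b d)" using H cb by auto
    note Fab = F1[OF lt(1,2)] and Fbd = F1[OF lt(2,4) bd]
    have ab: "a \<noteq> b" "not_ident_zero (\<lambda>\<epsilon>. P \<epsilon> a b)" using H by auto
    have ulab: "uniform_limit (Sp a) (\<lambda>\<epsilon> x. ET (Q \<epsilon> x) (Sp b) / tau \<epsilon> a b) (\<lambda>_. 1) (at_right 0)"
      using cond_iv lt(1,2) ab by blast
    show "uniform_limit (Sp a \<times> {b})
          (\<lambda>\<epsilon> xb. ET (Qbar Q Sp M \<epsilon> xb) (Sp c \<times> {d}) / taubar \<epsilon> (a, b)) (\<lambda>_. 1) (at_right 0)"
    proof (rule uniform_limitI)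
      fix e :: real assume e: "e > 0"
      define \<eta> where "\<eta> = min (1/2) (e/16)"
      define \<delta> where "\<delta> = min (1/2) (e/2)"
      have \<eta>p: "\<eta> > 0" using e by (simp add: \<eta>_def)
      have \<delta>p: "\<delta> > 0" using e by (simp add: \<delta>_def)
      have ev1: "\<forall>\<^sub>F \<epsilon> in at_right 0. \<forall>y\<in>Sp b. dist (Pk (Q \<epsilon> y) (Sp d) / P \<epsilon> b d) 1 < \<eta>"
        using uniform_limitD[OF conjunct2[OF conjunct2[OF Fbd]] \<eta>p] .
      have ev2: "\<forall>\<^sub>F \<epsilon> in at_right 0. \<forall>x\<in>Sp a. dist (ET (Q \<epsilon> x) (Sp b) / tau \<epsilon> a b) 1 < \<delta>"
        using uniform_limitD[OF ulab \<delta>p] .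
      have ev3: "\<forall>\<^sub>F \<epsilon> in at_right (0::real). 0 < \<epsilon>" by (rule eventually_at_right_less)
      show "\<forall>\<^sub>F \<epsilon> in at_right 0. \<forall>xb\<in>Sp a \<times> {b}. dist (ET (Qbar Q Sp M \<epsilon> xb) (Sp c \<times> {d}) / taubar \<epsilon> (a, b)) 1 < e"
        using ev1 ev2 ev3
      proof eventually_elim
        case (elim \<epsilon>)
        show ?case
        proof
          fix xb assume "xb \<in> Sp a \<times> {b}"
          then obtain x where xb: "xb = (x, b)" and x: "x \<in> Sp a" by auto
          have r: "\<bar>ET (Q \<epsilon> x) (Sp b) / tau \<epsilon> a b - 1\<bar> < \<delta>"
            using elim(2) x by (simp add: dist_real_def)
          have mnz: "ET (Q \<epsilon> x) (Sp b) \<noteq> 0"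
          proof
            assume "ET (Q \<epsilon> x) (Sp b) = 0"
            then show False using r by (simp add: \<delta>_def)
          qed
          have close: "\<bar>Pk (Q \<epsilon> y) (Sp d) / P \<epsilon> b d - 1\<bar> \<le> \<eta>" if "y \<in> Sp b" for y
            using elim(1) that by (simp add: dist_real_def less_imp_le)
          note KP = key_point[where Q=Q and \<epsilon>=\<epsilon> and x=x and M=M and Sp=Sp and b=b and d=d and P=P and \<eta>=\<eta>, OF Qk[OF elim(3)] fQ[OF elim(3)] part_borel' lt(2,4) _ _ less_imp_le[OF \<eta>p] _ close mnz]
          have Pp: "Pk (Q \<epsilon> x) (Sp b) > 0" using Fab ab elim(3) x by blast
          have Pbdp: "P \<epsilon> b d > 0" using Fbd elim(3) by blast
          have e1: "\<eta> \<le> 1/2" by (simp add: \<eta>_def)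
          have k1: "\<bar>ET (Qbar Q Sp M \<epsilon> (x, b)) (Sp b \<times> {d}) - ET (Q \<epsilon> x) (Sp b)\<bar> \<le> 4 * \<eta> * ET (Q \<epsilon> x) (Sp b)"
            and k3: "ET (Q \<epsilon> x) (Sp b) \<ge> 0"
            using KP[OF Pp Pbdp e1] by auto
          have "\<bar>ET (Qbar Q Sp M \<epsilon> (x, b)) (Sp b \<times> {d}) / tau \<epsilon> a b - 1\<bar> < 6 * \<eta> + \<delta>"
            by (rule final_real[OF k1 k3 r]) (use \<eta>p in \<open>simp_all add: \<delta>_def\<close>)
          also have "6 * \<eta> + \<delta> < e"
            using e by (simp add: \<eta>_def \<delta>_def)
          finally show "dist (ET (Qbar Q Sp M \<epsilon> xb) (Sp c \<times> {d}) / taubar \<epsilon> (a, b)) 1 < e"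
            by (simp add: xb cb taubar_def dist_real_def)
        qed
      qed
    qed
  qed
  have part2: "\<exists>C \<epsilon>0. C > 0 \<and> \<epsilon>0 > 0 \<and>
        (\<forall>a<M. \<forall>b<M. \<forall>c<M. \<forall>d<M. \<forall>\<epsilon>. \<forall>xb\<in>Sp a \<times> {b}.
          a \<noteq> b \<and> not_ident_zero (\<lambda>\<epsilon>. P \<epsilon> a b) \<and>
          c \<noteq> d \<and> not_ident_zero (\<lambda>\<epsilon>. P \<epsilon> c d) \<and>
          not_ident_zero (\<lambda>\<epsilon>. Pbar P \<epsilon> (a, b) (c, d)) \<and> 0 < \<epsilon> \<and> \<epsilon> \<le> \<epsilon>0 \<longrightarrow>
          VarT (Qbar Q Sp M \<epsilon> xb) (Sp c \<times> {d}) \<le> ennreal (C * (taubar \<epsilon> (a, b))\<^sup>2))"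
  proof -
    obtain C0 \<epsilon>0 where \<epsilon>0: "\<epsilon>0 > 0" and CV: "\<forall>i<M. \<forall>j<M. \<forall>\<epsilon>. \<forall>x\<in>Sp i.
        i \<noteq> j \<and> not_ident_zero (\<lambda>\<epsilon>. P \<epsilon> i j) \<and> 0 < \<epsilon> \<and> \<epsilon> \<le> \<epsilon>0 \<longrightarrow>
        VarT (Q \<epsilon> x) (Sp j) \<le> ennreal (C0 * (tau \<epsilon> i j)\<^sup>2)"
      using cond_v by blast
    define G where "G = (\<lambda>\<epsilon> i j. i \<noteq> j \<and> not_ident_zero (\<lambda>\<epsilon>. P \<epsilon> i j) \<longrightarrow>
        (\<forall>y\<in>Sp i. dist (Pk (Q \<epsilon> y) (Sp j) / P \<epsilon> i j) 1 < 1/2) \<and>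
        (\<forall>x\<in>Sp i. dist (ET (Q \<epsilon> x) (Sp j) / tau \<epsilon> i j) 1 < (1/2::real)))"
    have evg: "\<forall>\<^sub>F \<epsilon> in at_right 0. \<forall>i\<in>{..<M}. \<forall>j\<in>{..<M}. G \<epsilon> i j"
    proof (rule eventually_ball_finite)
      show "finite {..<M}" by simp
      show "\<forall>i\<in>{..<M}. \<forall>\<^sub>F \<epsilon> in at_right 0. \<forall>j\<in>{..<M}. G \<epsilon> i j"
      proof
        fix i assume i: "i \<in> {..<M}"
        show "\<forall>\<^sub>F \<epsilon> in at_right 0. \<forall>j\<in>{..<M}. G \<epsilon> i j"
        proof (rule eventually_ball_finite)
          show "finite {..<M}" by simp
          show "\<forall>j\<in>{..<M}. \<forall>\<^sub>F \<epsilon> in at_right 0. G \<epsilon> i j"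
          proof
            fix j assume j: "j \<in> {..<M}"
            show "\<forall>\<^sub>F \<epsilon> in at_right 0. G \<epsilon> i j"
            proof (cases "i \<noteq> j \<and> not_ident_zero (\<lambda>\<epsilon>. P \<epsilon> i j)")
              case True
              have u1: "uniform_limit (Sp i) (\<lambda>\<epsilon> x. Pk (Q \<epsilon> x) (Sp j) / P \<epsilon> i j) (\<lambda>_. 1) (at_right 0)"
                using F1[of i j] i j True by simp
              have u2: "uniform_limit (Sp i) (\<lambda>\<epsilon> x. ET (Q \<epsilon> x) (Sp j) / tau \<epsilon> i j) (\<lambda>_. 1) (at_right 0)"
                using cond_iv i j True by simp
              have h: "(0::real) < 1/2" by simp
              show ?thesis
                using eventually_conj[OF uniform_limitD[OF u1 h] uniform_limitD[OF u2 h]]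
                by (rule eventually_mono) (simp add: G_def)
            next
              case False
              have "\<forall>\<epsilon>. G \<epsilon> i j" using False unfolding G_def by blast
              then show ?thesis by simp
            qed
          qed
        qed
      qed
    qed
    then obtain \<delta>0 where \<delta>0: "\<delta>0 > 0" and goodG: "\<And>\<epsilon>. \<epsilon> > 0 \<Longrightarrow> \<epsilon> < \<delta>0 \<Longrightarrow> \<forall>i\<in>{..<M}. \<forall>j\<in>{..<M}. G \<epsilon> i j"
      unfolding eventually_at_right_field by auto
    define C where "C = 6 * max C0 0 + 54"
    define \<epsilon>1 where "\<epsilon>1 = min \<epsilon>0 (\<delta>0 / 2)"
    have Cp: "C > 0" by (simp add: C_def)
    have \<epsilon>1p: "\<epsilon>1 > 0" using \<epsilon>0 \<delta>0 by (simp add: \<epsilon>1_def)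
    have main: "VarT (Qbar Q Sp M \<epsilon> xb) (Sp c \<times> {d}) \<le> ennreal (C * (taubar \<epsilon> (a, b))\<^sup>2)"
      if lt: "a < M" "b < M" "c < M" "d < M" and xbin: "xb \<in> Sp a \<times> {b}"
        and H: "a \<noteq> b \<and> not_ident_zero (\<lambda>\<epsilon>. P \<epsilon> a b) \<and>
          c \<noteq> d \<and> not_ident_zero (\<lambda>\<epsilon>. P \<epsilon> c d) \<and>
          not_ident_zero (\<lambda>\<epsilon>. Pbar P \<epsilon> (a, b) (c, d)) \<and> 0 < \<epsilon> \<and> \<epsilon> \<le> \<epsilon>1"
      for a b c d \<epsilon> xb
    proof -
      have cb: "c = b" using F2 H by metis
      have bd: "b \<noteq> d" "not_ident_zero (\<lambda>\<epsilon>. P \<epsilon> b d)" using H cb by auto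
      have ab: "a \<noteq> b" "not_ident_zero (\<lambda>\<epsilon>. P \<epsilon> a b)" using H by auto
      have ep: "\<epsilon> > 0" and ee0: "\<epsilon> \<le> \<epsilon>0" and ed: "\<epsilon> < \<delta>0"
        using H \<delta>0 by (auto simp: \<epsilon>1_def)
      obtain x where xb: "xb = (x, b)" and x: "x \<in> Sp a" using xbin by auto
      have Gab: "G \<epsilon> a b" and Gbd: "G \<epsilon> b d" using goodG[OF ep ed] lt by auto
      have r: "\<bar>ET (Q \<epsilon> x) (Sp b) / tau \<epsilon> a b - 1\<bar> < 1/2"
        using Gab ab x unfolding G_def by (simp add: dist_real_def)
      have close: "\<bar>Pk (Q \<epsilon> y) (Sp d) / P \<epsilon> b d - 1\<bar> \<le> 1/2" if "y \<in> Sp b" for y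
        using Gbd bd that unfolding G_def by (simp add: dist_real_def less_imp_le)
      have mnz: "ET (Q \<epsilon> x) (Sp b) \<noteq> 0"
      proof
        assume "ET (Q \<epsilon> x) (Sp b) = 0"
        then show False using r by simp
      qed
      have Pp: "Pk (Q \<epsilon> x) (Sp b) > 0" using F1[OF lt(1,2) ab] ep x by blast
      have Pbdp: "P \<epsilon> b d > 0" using F1[OF lt(2,4) bd] ep by blast
      note KP = key_point[where Q=Q and \<epsilon>=\<epsilon> and x=x and M=M and Sp=Sp and b=b and d=d and P=P and \<eta>="1/2",
          OF Qk[OF ep] fQ[OF ep] part_borel' lt(2,4) Pp Pbdp _ _ close mnz]
      define m where "m = ET (Q \<epsilon> x) (Sp b)"
      define mb where "mb = ET (Qbar Q Sp M \<epsilon> (x, b)) (Sp b \<times> {d})"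
      define t where "t = tau \<epsilon> a b"
      have k1: "\<bar>mb - m\<bar> \<le> 2 * m" and k3: "m \<ge> 0"
        and k2: "VarT (Qbar Q Sp M \<epsilon> (x, b)) (Sp b \<times> {d}) \<le> ennreal 6 * VarT (Q \<epsilon> x) (Sp b) + ennreal (6 * (m - mb)\<^sup>2)"
        using KP by (auto simp: m_def mb_def)
      have V: "VarT (Q \<epsilon> x) (Sp b) \<le> ennreal (C0 * t\<^sup>2)"
        using CV lt(1,2) x ab ep ee0 by (auto simp: t_def)
      have r': "\<bar>m / t - 1\<bar> < 1/2" using r by (simp add: m_def t_def)
      have tnz: "t \<noteq> 0" using r' by auto
      have a32: "\<bar>m / t\<bar> < 3/2" using r' by linarith
      have "\<bar>m / t\<bar> = m / \<bar>t\<bar>" using k3 by (simp add: abs_divide abs_of_nonneg)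
      with a32 have "m / \<bar>t\<bar> < 3/2" by linarith
      then have mt: "m \<le> 3/2 * \<bar>t\<bar>" using tnz by (simp add: divide_less_eq)
      have "\<bar>m - mb\<bar> \<le> 3 * \<bar>t\<bar>" using k1 mt by linarith
      then have "\<bar>m - mb\<bar>\<^sup>2 \<le> (3 * \<bar>t\<bar>)\<^sup>2" by (intro power_mono) simp_all
      then have sq: "(m - mb)\<^sup>2 \<le> 9 * t\<^sup>2" by (simp add: power_mult_distrib)
      have "VarT (Qbar Q Sp M \<epsilon> (x, b)) (Sp b \<times> {d}) \<le> ennreal 6 * ennreal (C0 * t\<^sup>2) + ennreal (6 * (m - mb)\<^sup>2)"
        using k2 V by (meson add_right_mono mult_left_mono order_trans zero_le)
      also have "ennreal 6 * ennreal (C0 * t\<^sup>2) = ennreal (6 * (C0 * t\<^sup>2))"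
        by (rule ennreal_mult'[symmetric]) simp
      also have "\<dots> \<le> ennreal (6 * max C0 0 * t\<^sup>2)"
        by (rule ennreal_leI) (simp add: mult_right_mono)
      also have "ennreal (6 * (m - mb)\<^sup>2) \<le> ennreal (54 * t\<^sup>2)"
        by (rule ennreal_leI) (use sq in simp)
      also have "ennreal (6 * max C0 0 * t\<^sup>2) + ennreal (54 * t\<^sup>2) = ennreal (C * t\<^sup>2)"
        by (subst ennreal_plus[symmetric]) (simp_all add: C_def algebra_simps)
      finally show ?thesis by (simp add: xb cb taubar_def t_def)
    qed
    show ?thesis
      using Cp \<epsilon>1p main by blast
  qed
  show ?thesis using part1 part2 by blast
qed


end
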